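(* Let $G$ be a finite graph, $k$ a positive integer, $c$ a $k$-colouring of $G$ and $u\in V(G)$. Then $D_c$ is an independent set of $\mathcal{K}_k(G)$, and no colouring in $D_c$ is adjacent in $\mathcal{K}_k(G)$ to a colouring in $C_{c,u}$.
   Context: A $k$-colouring of $G$ is a map $c:V(G)\to\{1,\dots,k\}$ with $c(x)\neq c(y)$ for every edge $xy$. A Kempe swap from $c$: choose distinct colours $i,j$ and a connected component $H$ of the subgraph of $G$ induced by $c^{-1}(\{i,j\})$, and exchange colours $i,j$ on $H$; it is trivial if it changes the colour of exactly one vertex. $\mathcal{K}_k(G)$ has as vertices all $k$-colourings, two distinct colourings adjacent iff one is obtained from the other by a single Kempe swap. $C_{c,u}$ is the set of $k$-colourings differing from $c$ exactly at $u$; $D_c$ is the set of neighbours of $c$ in $\mathcal{K}_k(G)$ obtained from $c$ by a non-trivial Kempe swap (i.e. differing from $c$ at at least two vertices). *)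

theory Defs
  imports Main
begin

definition fin_graph :: "'a set \<Rightarrow> ('a \<Rightarrow> 'a \<Rightarrow> bool) \<Rightarrow> bool" where
  "fin_graph V E \<longleftrightarrow> finite V \<and> (\<forall>x y. E x y \<longrightarrow> x \<in> V \<and> y \<in> V)
     \<and> (\<forall>x y. E x y \<longrightarrow> E y x) \<and> (\<forall>x. \<not> E x x)"

text \<open>A k-colouring: proper map V -> {1..k}; normalised to 0 outside V so that
  colourings are determined by their values on V.\<close>
definition colouring :: "'a set \<Rightarrow> ('a \<Rightarrow> 'a \<Rightarrow> bool) \<Rightarrow> nat \<Rightarrow> ('a \<Rightarrow> nat) \<Rightarrow> bool" where
  "colouring V E k c \<longleftrightarrow> (\<forall>x\<in>V. c x \<in> {1..k}) \<and> (\<forall>x. x \<notin> V \<longrightarrow> c x = 0)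
     \<and> (\<forall>x\<in>V. \<forall>y\<in>V. E x y \<longrightarrow> c x \<noteq> c y)"

definition bichrom :: "'a set \<Rightarrow> ('a \<Rightarrow> nat) \<Rightarrow> nat \<Rightarrow> nat \<Rightarrow> 'a set" where
  "bichrom V c i j = {x \<in> V. c x = i \<or> c x = j}"

definition kempe_chain :: "'a set \<Rightarrow> ('a \<Rightarrow> 'a \<Rightarrow> bool) \<Rightarrow> ('a \<Rightarrow> nat) \<Rightarrow> nat \<Rightarrow> nat \<Rightarrow> 'a \<Rightarrow> 'a set" where
  "kempe_chain V E c i j v =
     {w. (\<lambda>x y. E x y \<and> x \<in> bichrom V c i j \<and> y \<in> bichrom V c i j)\<^sup>*\<^sup>* v w}"

definition swap_on :: "('a \<Rightarrow> nat) \<Rightarrow> nat \<Rightarrow> nat \<Rightarrow> 'a set \<Rightarrow> 'a \<Rightarrow> nat" where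
  "swap_on c i j H = (\<lambda>x. if x \<in> H then (if c x = i then j else if c x = j then i else c x) else c x)"

definition kempe_adj :: "'a set \<Rightarrow> ('a \<Rightarrow> 'a \<Rightarrow> bool) \<Rightarrow> nat \<Rightarrow> ('a \<Rightarrow> nat) \<Rightarrow> ('a \<Rightarrow> nat) \<Rightarrow> bool" where
  "kempe_adj V E k c d \<longleftrightarrow> colouring V E k c \<and> colouring V E k d \<and> c \<noteq> d \<and>
     (\<exists>i j v. i \<in> {1..k} \<and> j \<in> {1..k} \<and> i \<noteq> j \<and> v \<in> bichrom V c i j \<and>
        d = swap_on c i j (kempe_chain V E c i j v))"

definition C_set :: "'a set \<Rightarrow> ('a \<Rightarrow> 'a \<Rightarrow> bool) \<Rightarrow> nat \<Rightarrow> ('a \<Rightarrow> nat) \<Rightarrow> 'a \<Rightarrow> ('a \<Rightarrow> nat) set" where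
  "C_set V E k c u = {d. colouring V E k d \<and> {x \<in> V. d x \<noteq> c x} = {u}}"

definition D_set :: "'a set \<Rightarrow> ('a \<Rightarrow> 'a \<Rightarrow> bool) \<Rightarrow> nat \<Rightarrow> ('a \<Rightarrow> nat) \<Rightarrow> ('a \<Rightarrow> nat) set" where
  "D_set V E k c = {d. kempe_adj V E k c d \<and> card {x \<in> V. d x \<noteq> c x} \<ge> 2}"

end

theory Submission
  imports Defs
begin

lemma bichrom_sym: "bichrom V c i j = bichrom V c j i"
  unfolding bichrom_def by auto

lemma chain_sym: "kempe_chain V E c i j v = kempe_chain V E c j i v"
  unfolding kempe_chain_def using bichrom_sym by metis

lemma swap_sym: "swap_on c i j H = swap_on c j i H"
  unfolding swap_on_def by (rule ext) auto

lemma bichrom_swap: "bichrom V (swap_on c i j H) i j = bichrom V c i j"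
  unfolding bichrom_def swap_on_def by auto

lemma chain_swap: "kempe_chain V E (swap_on c i j H) i j v = kempe_chain V E c i j v"
  unfolding kempe_chain_def bichrom_swap by simp

lemma swap_swap: "i \<noteq> j \<Longrightarrow> swap_on (swap_on c i j H) i j H = c"
  unfolding swap_on_def by (rule ext) auto

lemma chain_sub:
  assumes "v \<in> bichrom V c i j"
  shows "kempe_chain V E c i j v \<subseteq> bichrom V c i j"
proof
  fix w assume "w \<in> kempe_chain V E c i j v"
  hence "(\<lambda>x y. E x y \<and> x \<in> bichrom V c i j \<and> y \<in> bichrom V c i j)\<^sup>*\<^sup>* v w"
    unfolding kempe_chain_def by simp
  then show "w \<in> bichrom V c i j" using assms
    by (induction rule: rtranclp_induct) auto
qed

lemma rtranclp_sym_aux: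
  assumes "\<And>x y. r x y \<Longrightarrow> r y x" and "r\<^sup>*\<^sup>* a b"
  shows "r\<^sup>*\<^sup>* b a"
  using assms(2)
proof (induction rule: rtranclp_induct)
  case base then show ?case by simp
next
  case (step y z)
  then show ?case using assms(1)
    by (meson converse_rtranclp_into_rtranclp)
qed

lemma chain_same:
  assumes symE: "\<forall>x y. E x y \<longrightarrow> E y x"
    and "w \<in> kempe_chain V E c i j v"
  shows "kempe_chain V E c i j w = kempe_chain V E c i j v"
proof -
  let ?R = "(\<lambda>x y. E x y \<and> x \<in> bichrom V c i j \<and> y \<in> bichrom V c i j)"
  have s: "\<And>x y. ?R x y \<Longrightarrow> ?R y x" using symE by blast
  have vw: "?R\<^sup>*\<^sup>* v w" using assms(2) unfolding kempe_chain_def by simp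
  have wv: "?R\<^sup>*\<^sup>* w v" using rtranclp_sym_aux[OF s vw] by blast
  show ?thesis unfolding kempe_chain_def
    using vw wv by (auto intro: rtranclp_trans)
qed

lemma adj_sym:
  assumes "kempe_adj V E k c d" shows "kempe_adj V E k d c"
proof -
  from assms obtain i j v where h: "i \<in> {1..k}" "j \<in> {1..k}" "i \<noteq> j"
    "v \<in> bichrom V c i j" "d = swap_on c i j (kempe_chain V E c i j v)"
    and cd: "colouring V E k c" "colouring V E k d" "c \<noteq> d"
    unfolding kempe_adj_def by blast
  have "c = swap_on d i j (kempe_chain V E d i j v)"
    using h chain_swap swap_swap by metis
  moreover have "v \<in> bichrom V d i j" using h bichrom_swap by metis
  ultimately show ?thesis unfolding kempe_adj_def using h cd by metis
qed

lemma keyX: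
  assumes symE: "\<forall>x y. E x y \<longrightarrow> E y x"
    and ij: "i \<noteq> j" and pq: "p \<noteq> q"
    and v: "v \<in> bichrom V c i j"
    and d1: "d1 = swap_on c i j (kempe_chain V E c i j v)"
    and e: "e = swap_on d1 p q (kempe_chain V E d1 p q w)"
    and x: "x \<in> kempe_chain V E c i j v"
    and ex: "e x = c x"
  shows "e = c"
proof -
  have xb: "x \<in> bichrom V c i j" using chain_sub[OF v] x by blast
  hence cx: "c x = i \<or> c x = j" unfolding bichrom_def by simp
  have d1x: "d1 x = (if c x = i then j else i)" using d1 x cx ij unfolding swap_on_def by auto
  have ne: "e x \<noteq> d1 x" using ex d1x cx ij by auto
  hence xH3: "x \<in> kempe_chain V E d1 p q w" using e unfolding swap_on_def by (auto split: if_splits)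
  have ex2: "e x = (if d1 x = p then q else if d1 x = q then p else d1 x)"
    using e xH3 unfolding swap_on_def by auto
  have pqij: "(p = i \<and> q = j) \<or> (p = j \<and> q = i)"
  proof -
    have dpq: "d1 x = p \<or> d1 x = q"
      using ex2 ne by (auto split: if_splits)
    moreover have "e x = (if d1 x = p then q else p)" using ex2 pq dpq by auto
    ultimately show ?thesis using ex d1x cx ij pq by (auto split: if_splits)
  qed
  have H3a: "kempe_chain V E d1 i j w = kempe_chain V E c i j w"
    unfolding d1 by (rule chain_swap)
  have H3: "kempe_chain V E d1 p q w = kempe_chain V E c i j w"
    using pqij
  proof
    assume "p = i \<and> q = j" then show ?thesis using H3a by simp
  next
    assume "p = j \<and> q = i" then show ?thesis using H3a chain_sym[of V E d1 i j w] by simp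
  qed
  have eq: "kempe_chain V E c i j w = kempe_chain V E c i j v"
    using chain_same[OF symE, of x V c i j w] chain_same[OF symE x] xH3 H3 by simp
  have sw: "swap_on d1 p q = swap_on d1 i j"
    using pqij swap_sym[of d1 i j] by (auto simp del: swap_on_def)
  have "e = swap_on d1 i j (kempe_chain V E c i j v)"
    using e H3 eq sw by simp
  then show ?thesis using d1 swap_swap[OF ij] by simp
qed


theorem lemma3p2:
  fixes V :: "'a set" and E :: "'a \<Rightarrow> 'a \<Rightarrow> bool" and k :: nat
    and c :: "'a \<Rightarrow> nat" and u :: 'a
  assumes "fin_graph V E" and "k \<ge> 1" and "colouring V E k c" and "u \<in> V"
  shows "(\<forall>d1\<in>D_set V E k c. \<forall>d2\<in>D_set V E k c. \<not> kempe_adj V E k d1 d2)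
       \<and> (\<forall>d\<in>D_set V E k c. \<forall>e\<in>C_set V E k c u. \<not> kempe_adj V E k d e)"
proof -
  have symE: "\<forall>x y. E x y \<longrightarrow> E y x" using assms(1) unfolding fin_graph_def by blast
  have finV: "finite V" using assms(1) unfolding fin_graph_def by blast
  have unD: "\<exists>i j v. i \<noteq> j \<and> v \<in> bichrom V c i j \<and> d = swap_on c i j (kempe_chain V E c i j v)
      \<and> {x \<in> V. d x \<noteq> c x} = kempe_chain V E c i j v \<and> card (kempe_chain V E c i j v) \<ge> 2"
    if "d \<in> D_set V E k c" for d
  proof -
    have ka: "kempe_adj V E k c d" and cd: "card {x \<in> V. d x \<noteq> c x} \<ge> 2"
      using that unfolding D_set_def by auto
    from ka obtain i j v where h: "i \<noteq> j" "v \<in> bichrom V c i j"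
      "d = swap_on c i j (kempe_chain V E c i j v)"
      unfolding kempe_adj_def by blast
    have sub: "kempe_chain V E c i j v \<subseteq> bichrom V c i j" by (rule chain_sub[OF h(2)])
    have "{x \<in> V. d x \<noteq> c x} = kempe_chain V E c i j v"
    proof (intro set_eqI iffI)
      fix x assume "x \<in> {x \<in> V. d x \<noteq> c x}"
      hence "d x \<noteq> c x" by simp
      then show "x \<in> kempe_chain V E c i j v" using h(3) unfolding swap_on_def by (auto split: if_splits)
    next
      fix x assume x: "x \<in> kempe_chain V E c i j v"
      hence "x \<in> bichrom V c i j" using sub by blast
      hence xv: "x \<in> V" and cx: "c x = i \<or> c x = j" unfolding bichrom_def by auto
      have "d x = (if c x = i then j else if c x = j then i else c x)"
        using x h(3) unfolding swap_on_def by simp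
      hence "d x \<noteq> c x" using cx h(1) by auto
      then show "x \<in> {x \<in> V. d x \<noteq> c x}" using xv by blast
    qed
    moreover from this have "card (kempe_chain V E c i j v) \<ge> 2" using cd by simp
    ultimately show ?thesis using h by blast
  qed
  have partY: False if d1: "d1 \<in> D_set V E k c" and d2: "d2 \<in> D_set V E k c"
     and a: "kempe_adj V E k d1 d2" and x: "x \<in> V" "d1 x \<noteq> c x" "d2 x = c x" for d1 d2 x
  proof -
    obtain i j v where h: "i \<noteq> j" "v \<in> bichrom V c i j" "d1 = swap_on c i j (kempe_chain V E c i j v)"
      "{x \<in> V. d1 x \<noteq> c x} = kempe_chain V E c i j v" using unD[OF d1] by blast
    obtain p q w where h2: "p \<noteq> q" "d2 = swap_on d1 p q (kempe_chain V E d1 p q w)"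
      using a unfolding kempe_adj_def by blast
    have "x \<in> kempe_chain V E c i j v" using h(4) x by blast
    hence "d2 = c" using keyX[OF symE h(1) h2(1) h(2) h(3) h2(2)] x(3) by blast
    moreover have "c \<noteq> d2" using d2 unfolding D_set_def kempe_adj_def by blast
    ultimately show False by simp
  qed
  have part1: "\<not> kempe_adj V E k d1 d2" if d1: "d1 \<in> D_set V E k c" and d2: "d2 \<in> D_set V E k c" for d1 d2
  proof
    assume a: "kempe_adj V E k d1 d2"
    obtain i j v where h: "i \<noteq> j" "v \<in> bichrom V c i j" "d1 = swap_on c i j (kempe_chain V E c i j v)"
      "{x \<in> V. d1 x \<noteq> c x} = kempe_chain V E c i j v" "card (kempe_chain V E c i j v) \<ge> 2"
      using unD[OF d1] by blast
    obtain a' b v' where g: "a' \<noteq> b" "v' \<in> bichrom V c a' b" "d2 = swap_on c a' b (kempe_chain V E c a' b v')"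
      "{x \<in> V. d2 x \<noteq> c x} = kempe_chain V E c a' b v'"
      using unD[OF d2] by blast
    have s12: "kempe_chain V E c i j v \<subseteq> kempe_chain V E c a' b v'"
      using partY[OF d1 d2 a] h(4) g(4) by blast
    have s21: "kempe_chain V E c a' b v' \<subseteq> kempe_chain V E c i j v"
      using partY[OF d2 d1 adj_sym[OF a]] h(4) g(4) by blast
    let ?H = "kempe_chain V E c i j v"
    let ?R = "(\<lambda>x y. E x y \<and> x \<in> bichrom V c i j \<and> y \<in> bichrom V c i j)"
    have "\<exists>y. y \<in> ?H \<and> y \<noteq> v"
    proof (rule ccontr)
      assume "\<not> ?thesis"
      hence "?H \<subseteq> {v}" by blast
      hence "card ?H \<le> card {v}" by (intro card_mono) auto
      hence "card ?H \<le> 1" by simp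
      then show False using h(5) by simp
    qed
    then obtain y where y: "?R\<^sup>*\<^sup>* v y" "y \<noteq> v" unfolding kempe_chain_def by blast
    have "\<exists>z. ?R v z" using y by (blast elim: converse_rtranclpE)
    then obtain z where z: "?R v z" by blast
    have "v \<in> V" "z \<in> V" "E v z" using z unfolding bichrom_def by auto
    hence vz: "c v \<noteq> c z" using assms(3) unfolding colouring_def by blast
    have cij: "c v \<in> {i,j}" "c z \<in> {i,j}" using z unfolding bichrom_def by auto
    have "v \<in> ?H" "z \<in> ?H" using z unfolding kempe_chain_def by auto
    hence "v \<in> bichrom V c a' b" "z \<in> bichrom V c a' b"
      using s12 chain_sub[OF g(2)] by blast+
    hence "c v \<in> {a', b}" "c z \<in> {a', b}" unfolding bichrom_def by auto
    hence ab: "(a' = i \<and> b = j) \<or> (a' = j \<and> b = i)" using vz cij h(1) g(1) by auto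
    have HH: "kempe_chain V E c a' b v' = ?H" using s12 s21 by (rule subset_antisym[rotated])
    have "d1 = d2"
      using ab
    proof
      assume "a' = i \<and> b = j" then show ?thesis using h(3) g(3) HH by simp
    next
      assume "a' = j \<and> b = i" then show ?thesis using h(3) g(3) HH swap_sym[of c i j] by simp
    qed
    moreover have "d1 \<noteq> d2" using a unfolding kempe_adj_def by blast
    ultimately show False by simp
  qed
  have part2: "\<not> kempe_adj V E k d e" if d: "d \<in> D_set V E k c" and e: "e \<in> C_set V E k c u" for d e
  proof
    assume a: "kempe_adj V E k d e"
    obtain i j v where h: "i \<noteq> j" "v \<in> bichrom V c i j" "d = swap_on c i j (kempe_chain V E c i j v)"
      "{x \<in> V. d x \<noteq> c x} = kempe_chain V E c i j v" "card (kempe_chain V E c i j v) \<ge> 2"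
      using unD[OF d] by blast
    obtain p q w where h2: "p \<noteq> q" "e = swap_on d p q (kempe_chain V E d p q w)"
      using a unfolding kempe_adj_def by blast
    have eC: "{x \<in> V. e x \<noteq> c x} = {u}" using e unfolding C_set_def by blast
    have "\<exists>x. x \<in> kempe_chain V E c i j v \<and> x \<noteq> u"
    proof (rule ccontr)
      assume "\<not> ?thesis"
      hence "kempe_chain V E c i j v \<subseteq> {u}" by blast
      hence "card (kempe_chain V E c i j v) \<le> card {u}" by (intro card_mono) auto
      hence "card (kempe_chain V E c i j v) \<le> 1" by simp
      then show False using h(5) by simp
    qed
    then obtain x where x: "x \<in> kempe_chain V E c i j v" "x \<noteq> u" by blast
    have "x \<in> V" using x h(4) by blast
    hence "e x = c x" using eC x(2) by blast
    hence "e = c" using keyX[OF symE h(1) h2(1) h(2) h(3) h2(2) x(1)] by blast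
    then show False using eC by auto
  qed
  show ?thesis using part1 part2 by blast
qed

end
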